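(* There exist a finite-dimensional inner product vector space $(E,g)$ over $k$ ($k=\mathbb R$ or $\mathbb C$), an endomorphism $f\in\operatorname{End}_k(E)$ and $f$-invariant subspaces $\mathcal H_f=\{H_1,\dots,H_n\}$ with $E=H_1\oplus\dots\oplus H_n$ such that $f^+_{\mathcal H_f}\ne f^\dagger$.
   Context: For an endomorphism $h$ of a finite-dimensional inner product space $H$, its Moore-Penrose inverse $h^\dagger$ is the linear map equal to $(h|_{[\operatorname{Ker} h]^\perp})^{-1}$ on $\operatorname{Im} h$ and $0$ on $[\operatorname{Im} h]^\perp$. With $f_i=f|_{H_i}$ and $H_i$ carrying the restricted inner product, $f^+_{\mathcal H_f}$ is the unique endomorphism of $E$ with $f^+_{\mathcal H_f}|_{H_i}=f_i^\dagger$ for each $i$. *)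

theory Defs
  imports "Jordan_Normal_Form.Matrix" "Jordan_Normal_Form.Conjugate"
begin

text \<open>The space E is modelled (up to isometry) as carrier_vec n with an arbitrary
  inner product g (linear in the first argument, conjugate symmetric, positive definite).
  Scalars: any conjugatable ordered field; used with real and complex (complex
  order = HOL-Library Complex_Order, so 0 < z means z real and positive).\<close>

definition inner_prod_on :: "nat \<Rightarrow> ('k::conjugatable_ordered_field vec \<Rightarrow> 'k vec \<Rightarrow> 'k) \<Rightarrow> bool" where
  "inner_prod_on n g \<longleftrightarrow>
     (\<forall>x\<in>carrier_vec n. \<forall>y\<in>carrier_vec n. \<forall>z\<in>carrier_vec n. g (x + y) z = g x z + g y z) \<and>
     (\<forall>x\<in>carrier_vec n. \<forall>y\<in>carrier_vec n. \<forall>c. g (c \<cdot>\<^sub>v x) y = c * g x y) \<and>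
     (\<forall>x\<in>carrier_vec n. \<forall>y\<in>carrier_vec n. g y x = conjugate (g x y)) \<and>
     (\<forall>x\<in>carrier_vec n. x \<noteq> 0\<^sub>v n \<longrightarrow> 0 < g x x)"

definition is_subspace :: "nat \<Rightarrow> 'k::field vec set \<Rightarrow> bool" where
  "is_subspace n H \<longleftrightarrow> H \<subseteq> carrier_vec n \<and> 0\<^sub>v n \<in> H \<and>
     (\<forall>x\<in>H. \<forall>y\<in>H. x + y \<in> H) \<and> (\<forall>x\<in>H. \<forall>c. c \<cdot>\<^sub>v x \<in> H)"

definition vec_sum :: "nat \<Rightarrow> (nat \<Rightarrow> 'k::field vec) \<Rightarrow> nat \<Rightarrow> 'k vec" where
  "vec_sum n hs m = foldr (\<lambda>i acc. hs i + acc) [0..<m] (0\<^sub>v n)"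

text \<open>E = H_0 \<oplus> ... \<oplus> H_(m-1): every vector is uniquely a sum of components.\<close>
definition is_direct_sum :: "nat \<Rightarrow> nat \<Rightarrow> (nat \<Rightarrow> 'k::field vec set) \<Rightarrow> bool" where
  "is_direct_sum n m H \<longleftrightarrow>
     (\<forall>x\<in>carrier_vec n. \<exists>!hs. (\<forall>i<m. hs i \<in> H i) \<and> (\<forall>i. m \<le> i \<longrightarrow> hs i = 0\<^sub>v n) \<and>
        x = vec_sum n hs m)"

definition invariant_under :: "'k::field mat \<Rightarrow> 'k vec set \<Rightarrow> bool" where
  "invariant_under A H \<longleftrightarrow> (\<forall>x\<in>H. A *\<^sub>v x \<in> H)"

text \<open>Moore-Penrose inverse h' of an endomorphism h of the subspace H (with the
  restricted inner product g): h' is linear on H, maps H to H, equals the inverse of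
  h restricted to (Ker h)^perp on Im h, and is 0 on (Im h)^perp (complements in H).\<close>
definition is_mp_inverse ::
  "nat \<Rightarrow> ('k::conjugatable_ordered_field vec \<Rightarrow> 'k vec \<Rightarrow> 'k) \<Rightarrow> 'k vec set \<Rightarrow>
   ('k vec \<Rightarrow> 'k vec) \<Rightarrow> ('k vec \<Rightarrow> 'k vec) \<Rightarrow> bool" where
  "is_mp_inverse n g H h h' \<longleftrightarrow>
     (\<forall>x\<in>H. h' x \<in> H) \<and>
     (\<forall>x\<in>H. \<forall>y\<in>H. h' (x + y) = h' x + h' y) \<and>
     (\<forall>x\<in>H. \<forall>c. h' (c \<cdot>\<^sub>v x) = c \<cdot>\<^sub>v h' x) \<and>
     (\<forall>y\<in>h ` H. (\<forall>z\<in>{x\<in>H. h x = 0\<^sub>v n}. g (h' y) z = 0) \<and> h (h' y) = y) \<and>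
     (\<forall>y\<in>H. (\<forall>z\<in>h ` H. g y z = 0) \<longrightarrow> h' y = 0\<^sub>v n)"

end

theory Submission
  imports Defs
begin

lemma vec2_eq: "x \<in> carrier_vec 2 \<Longrightarrow> y \<in> carrier_vec 2 \<Longrightarrow> x = y \<longleftrightarrow> x$0 = y$0 \<and> x$1 = y$1"
  by (auto intro!: eq_vecI simp: less_2_cases_iff)

lemma mulvec2: "x \<in> carrier_vec 2 \<Longrightarrow> mat 2 2 f *\<^sub>v x = vec 2 (\<lambda>i. f(i,0)*x$0 + f(i,1)*x$1)"
  by (auto intro!: eq_vecI simp: scalar_prod_def row_def numeral_2_eq_2)

lemma vsum2: "vec_sum n hs 2 = hs 0 + (hs 1 + 0\<^sub>v n)"
  by (simp add: vec_sum_def numeral_2_eq_2)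

lemma pos_add: "(0::'k::conjugatable_ordered_field) < a \<Longrightarrow> 0 \<le> b \<Longrightarrow> 0 < a + b"
  by (metis add.right_neutral add_left_mono less_le_trans)
lemma pos_add2: "(0::'k::conjugatable_ordered_field) \<le> a \<Longrightarrow> 0 < b \<Longrightarrow> 0 < a + b"
  by (metis add.commute pos_add)

lemma generic:
  assumes two: "(2::'k::conjugatable_ordered_field) \<noteq> 0"
  shows "\<exists>(n::nat) (g::'k vec \<Rightarrow> 'k vec \<Rightarrow> 'k) (A::'k mat) (m::nat) (H::nat \<Rightarrow> 'k vec set)
            (Fplus::'k mat) (Fdag::'k mat).
           inner_prod_on n g \<and> A \<in> carrier_mat n n \<and>
           (\<forall>i<m. is_subspace n (H i) \<and> invariant_under A (H i)) \<and> is_direct_sum n m H \<and>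
           Fplus \<in> carrier_mat n n \<and>
           (\<forall>i<m. is_mp_inverse n g (H i) ((*\<^sub>v) A) ((*\<^sub>v) Fplus)) \<and>
           Fdag \<in> carrier_mat n n \<and>
           is_mp_inverse n g (carrier_vec n) ((*\<^sub>v) A) ((*\<^sub>v) Fdag) \<and>
           Fplus \<noteq> Fdag"
proof -
  define g :: "'k vec \<Rightarrow> 'k vec \<Rightarrow> 'k" where "g x y = x$0 * conjugate (y$0) + x$1 * conjugate (y$1)" for x y
  define A :: "'k mat" where "A = mat 2 2 (\<lambda>(i,j). if i = 0 \<and> j = 0 then 1 else if i = 0 \<and> j = 1 then -1 else 0)"
  define D :: "'k mat" where "D = mat 2 2 (\<lambda>(i,j). if j = 0 then (if i = 0 then 1/2 else -1/2) else 0)"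
  define H1 :: "'k vec set" where "H1 = {x \<in> carrier_vec 2. x$1 = 0}"
  define H2 :: "'k vec set" where "H2 = {x \<in> carrier_vec 2. x$0 = x$1}"
  define H where "H i = (if i = 0 then H1 else H2)" for i :: nat
  have Av: "A *\<^sub>v x = vec 2 (\<lambda>i. if i = 0 then x$0 - x$1 else 0)" if "x \<in> carrier_vec 2" for x
    using that unfolding A_def by (subst mulvec2) (auto intro!: eq_vecI)
  have Dv: "D *\<^sub>v x = vec 2 (\<lambda>i. if i = 0 then x$0 / 2 else - (x$0 / 2))" if "x \<in> carrier_vec 2" for x
    using that unfolding D_def by (subst mulvec2) (auto intro!: eq_vecI)
  have ip: "inner_prod_on 2 g"
    unfolding inner_prod_on_def g_def
  proof (intro conjI ballI allI impI)
    fix x y z :: "'k vec" assume "x \<in> carrier_vec 2" "y \<in> carrier_vec 2" "z \<in> carrier_vec 2"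
    then show "(x + y) $ 0 * conjugate (z $ 0) + (x + y) $ 1 * conjugate (z $ 1) =
       x $ 0 * conjugate (z $ 0) + x $ 1 * conjugate (z $ 1) + (y $ 0 * conjugate (z $ 0) + y $ 1 * conjugate (z $ 1))"
      by (simp add: algebra_simps)
  next
    fix x y :: "'k vec" and c assume "x \<in> carrier_vec 2" "y \<in> carrier_vec 2"
    then show "(c \<cdot>\<^sub>v x) $ 0 * conjugate (y $ 0) + (c \<cdot>\<^sub>v x) $ 1 * conjugate (y $ 1) =
       c * (x $ 0 * conjugate (y $ 0) + x $ 1 * conjugate (y $ 1))"
      by (simp add: algebra_simps)
  next
    fix x y :: "'k vec" assume "x \<in> carrier_vec 2" "y \<in> carrier_vec 2"
    then show "y $ 0 * conjugate (x $ 0) + y $ 1 * conjugate (x $ 1) =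
       conjugate (x $ 0 * conjugate (y $ 0) + x $ 1 * conjugate (y $ 1))"
      by (simp add: conjugate_dist_add conjugate_dist_mul mult.commute)
  next
    fix x :: "'k vec" assume x: "x \<in> carrier_vec 2" "x \<noteq> 0\<^sub>v 2"
    then have "x$0 \<noteq> 0 \<or> x$1 \<noteq> 0" using vec2_eq[of x "0\<^sub>v 2"] by auto
    then show "0 < x $ 0 * conjugate (x $ 0) + x $ 1 * conjugate (x $ 1)"
      by (auto intro: pos_add pos_add2 conjugate_square_positive)
  qed
  have c1: "A \<in> carrier_mat 2 2" "D \<in> carrier_mat 2 2" unfolding A_def D_def by auto
  have c2: "A \<noteq> D"
  proof
    assume "A = D"
    then have "A $$ (0,1) = D $$ (0,1)" by simp
    then show False unfolding A_def D_def by simp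
  qed
  have s1: "is_subspace 2 H1" "invariant_under A H1"
    unfolding is_subspace_def invariant_under_def H1_def by (auto simp: Av)
  have s2: "is_subspace 2 H2" "invariant_under A H2"
    unfolding is_subspace_def invariant_under_def H2_def by (auto simp: Av)
  have c3: "\<forall>i<2. is_subspace 2 (H i) \<and> invariant_under A (H i)"
    using s1 s2 by (auto simp: H_def less_2_cases_iff)
  have c4: "is_direct_sum 2 2 H"
    unfolding is_direct_sum_def
  proof
    fix x :: "'k vec" assume x: "x \<in> carrier_vec 2"
    define hs where "hs i = (if i = 0 then vec 2 (\<lambda>j. if j = 0 then x$0 - x$1 else 0)
        else if i = 1 then vec 2 (\<lambda>j. x$1) else 0\<^sub>v 2)" for i :: nat
    show "\<exists>!hs. (\<forall>i<2. hs i \<in> H i) \<and> (\<forall>i. 2 \<le> i \<longrightarrow> hs i = 0\<^sub>v 2) \<and> x = vec_sum 2 hs 2"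
    proof (rule ex1I[of _ hs])
      have "x = hs 0 + (hs 1 + 0\<^sub>v 2)"
        using x by (simp add: vec2_eq hs_def)
      then show "(\<forall>i<2. hs i \<in> H i) \<and> (\<forall>i. 2 \<le> i \<longrightarrow> hs i = 0\<^sub>v 2) \<and> x = vec_sum 2 hs 2"
        by (auto simp: vsum2 less_2_cases_iff H_def H1_def H2_def hs_def)
    next
      fix ks assume ks: "(\<forall>i<2. ks i \<in> H i) \<and> (\<forall>i. 2 \<le> i \<longrightarrow> ks i = 0\<^sub>v 2) \<and> x = vec_sum 2 ks 2"
      then have k0: "ks 0 \<in> H1" and k1: "ks 1 \<in> H2" and kx: "x = ks 0 + (ks 1 + 0\<^sub>v 2)"
        using spec[OF conjunct1[OF ks], of 0] spec[OF conjunct1[OF ks], of 1] by (auto simp: H_def vsum2)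
      have "ks 0 = hs 0 \<and> ks 1 = hs 1"
        using k0 k1 kx x by (auto simp: H1_def H2_def hs_def vec2_eq)
      then show "ks = hs"
      proof -
        assume e: "ks 0 = hs 0 \<and> ks 1 = hs 1"
        show "ks = hs"
        proof
          fix i show "ks i = hs i"
            using e ks by (cases "i < 2") (auto simp: less_2_cases_iff hs_def)
        qed
      qed
    qed
  qed
  have e10: "vec 2 (\<lambda>i. if i = 0 then 1 else 0) \<in> H1" by (simp add: H1_def)
  have Ae10: "A *\<^sub>v vec 2 (\<lambda>i. if i = 0 then 1 else 0) = vec 2 (\<lambda>i. if i = 0 then 1 else 0)"
    by (simp add: Av vec2_eq)
  have m1: "is_mp_inverse 2 g H1 ((*\<^sub>v) A) ((*\<^sub>v) A)"
    unfolding is_mp_inverse_def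
  proof (intro conjI ballI allI impI)
    fix x assume "x \<in> H1" then show "A *\<^sub>v x \<in> H1" using s1 by (simp add: invariant_under_def)
  next
    fix x y assume "x \<in> H1" "y \<in> H1" then show "A *\<^sub>v (x + y) = A *\<^sub>v x + A *\<^sub>v y"
      by (auto simp: H1_def Av vec2_eq)
  next
    fix x c assume "x \<in> H1" then show "A *\<^sub>v (c \<cdot>\<^sub>v x) = c \<cdot>\<^sub>v (A *\<^sub>v x)"
      by (auto simp: H1_def Av vec2_eq algebra_simps)
  next
    fix y z assume "y \<in> (*\<^sub>v) A ` H1" "z \<in> {x \<in> H1. A *\<^sub>v x = 0\<^sub>v 2}"
    then have "z = 0\<^sub>v 2" by (auto simp: H1_def Av vec2_eq)
    then show "g (A *\<^sub>v y) z = 0" by (simp add: g_def)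
  next
    fix y assume "y \<in> (*\<^sub>v) A ` H1"
    then show "A *\<^sub>v (A *\<^sub>v y) = y" by (auto simp: H1_def Av vec2_eq)
  next
    fix y assume y: "y \<in> H1" and o: "\<forall>z\<in>(*\<^sub>v) A ` H1. g y z = 0"
    have "g y (vec 2 (\<lambda>i. if i = 0 then 1 else 0)) = 0"
      using o e10 Ae10 by (metis image_eqI)
    then show "A *\<^sub>v y = 0\<^sub>v 2" using y by (auto simp: H1_def Av vec2_eq g_def)
  qed
  have m2: "is_mp_inverse 2 g H2 ((*\<^sub>v) A) ((*\<^sub>v) A)"
    unfolding is_mp_inverse_def
    by (auto simp: H2_def Av vec2_eq g_def)
  have c5: "\<forall>i<2. is_mp_inverse 2 g (H i) ((*\<^sub>v) A) ((*\<^sub>v) A)"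
    using m1 m2 by (auto simp: H_def less_2_cases_iff)
  have c6: "is_mp_inverse 2 g (carrier_vec 2) ((*\<^sub>v) A) ((*\<^sub>v) D)"
    unfolding is_mp_inverse_def
  proof (intro conjI ballI allI impI)
    fix x :: "'k vec" assume "x \<in> carrier_vec 2" then show "D *\<^sub>v x \<in> carrier_vec 2" by (simp add: Dv)
  next
    fix x y :: "'k vec" assume "x \<in> carrier_vec 2" "y \<in> carrier_vec 2"
    then show "D *\<^sub>v (x + y) = D *\<^sub>v x + D *\<^sub>v y"
      by (auto simp: Dv vec2_eq add_divide_distrib)
  next
    fix x :: "'k vec" and c assume "x \<in> carrier_vec 2" then show "D *\<^sub>v (c \<cdot>\<^sub>v x) = c \<cdot>\<^sub>v (D *\<^sub>v x)"
      by (auto simp: Dv vec2_eq)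
  next
    fix y z assume "y \<in> (*\<^sub>v) A ` carrier_vec 2" "z \<in> {x \<in> carrier_vec 2. A *\<^sub>v x = 0\<^sub>v 2}"
    then show "g (D *\<^sub>v y) z = 0" by (auto simp: Av Dv vec2_eq g_def)
  next
    fix y assume "y \<in> (*\<^sub>v) A ` carrier_vec 2"
    then show "A *\<^sub>v (D *\<^sub>v y) = y" using two by (auto simp: Av Dv vec2_eq)
  next
    fix y :: "'k vec" assume y: "y \<in> carrier_vec 2" and o: "\<forall>z\<in>(*\<^sub>v) A ` carrier_vec 2. g y z = 0"
    have "g y (vec 2 (\<lambda>i. if i = 0 then 1 else 0)) = 0"
      using o Ae10 by (metis image_eqI vec_carrier)
    then show "D *\<^sub>v y = 0\<^sub>v 2" using y by (auto simp: Dv vec2_eq g_def)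
  qed
  show ?thesis
    apply (rule exI[of _ 2], rule exI[of _ g], rule exI[of _ A], rule exI[of _ 2], rule exI[of _ H],
      rule exI[of _ A], rule exI[of _ D])
    using ip c1 c2 c3 c4 c5 c6 by blast
qed
theorem corollary3p5:
  shows "(\<exists>(n::nat) (g::real vec \<Rightarrow> real vec \<Rightarrow> real) (A::real mat) (m::nat) (H::nat \<Rightarrow> real vec set)
            (Fplus::real mat) (Fdag::real mat).
           inner_prod_on n g \<and> A \<in> carrier_mat n n \<and>
           (\<forall>i<m. is_subspace n (H i) \<and> invariant_under A (H i)) \<and> is_direct_sum n m H \<and>
           Fplus \<in> carrier_mat n n \<and>
           (\<forall>i<m. is_mp_inverse n g (H i) ((*\<^sub>v) A) ((*\<^sub>v) Fplus)) \<and>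
           Fdag \<in> carrier_mat n n \<and>
           is_mp_inverse n g (carrier_vec n) ((*\<^sub>v) A) ((*\<^sub>v) Fdag) \<and>
           Fplus \<noteq> Fdag)
       \<and>
       (\<exists>(n::nat) (g::complex vec \<Rightarrow> complex vec \<Rightarrow> complex) (A::complex mat) (m::nat) (H::nat \<Rightarrow> complex vec set)
            (Fplus::complex mat) (Fdag::complex mat).
           inner_prod_on n g \<and> A \<in> carrier_mat n n \<and>
           (\<forall>i<m. is_subspace n (H i) \<and> invariant_under A (H i)) \<and> is_direct_sum n m H \<and>
           Fplus \<in> carrier_mat n n \<and>
           (\<forall>i<m. is_mp_inverse n g (H i) ((*\<^sub>v) A) ((*\<^sub>v) Fplus)) \<and>
           Fdag \<in> carrier_mat n n \<and>
           is_mp_inverse n g (carrier_vec n) ((*\<^sub>v) A) ((*\<^sub>v) Fdag) \<and>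
           Fplus \<noteq> Fdag)"
    using generic[where 'k=real] generic[where 'k=complex] by simp

end
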